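(* Let $v_{1,1},v_{2,1},w_{1,1},w_{2,1}\in\mathbb R$ satisfy $w_{i,1}>0$, $4v_{i,1}+w_{i,1}>0$ ($i=1,2$), $v_{1,1}v_{2,1}>0$ and $c_2>c_1$, where $c_i:=2v_{i,1}+w_{i,1}$. Then for every $\vartheta\in(-\pi,\pi]$ one has $2\omega_+(\vartheta)\neq\omega_-(2\vartheta)$ and $2\omega_+(\vartheta)\neq\omega_+(2\vartheta)$.
   Context: For $\vartheta\in\mathbb R$ define $$\omega_\pm(\vartheta):=\sqrt{\tfrac12\Big(c_1+c_2\pm\sqrt{(c_1-c_2)^2+8v_{1,1}v_{2,1}(\cos\vartheta+1)}\Big)},$$ which are well defined and positive under the stated assumptions (these are the optical ($+$) and acoustical ($-$) branches of the dispersion relation $\det H(\omega,\vartheta)=0$, $H(\omega,\vartheta)=\begin{pmatrix}\omega^2-c_1 & v_{1,1}(e^{i\vartheta}+1)\\ v_{2,1}(1+e^{-i\vartheta}) & \omega^2-c_2\end{pmatrix}$, of the linearized diatomic chain). *)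

theory Defs
  imports Complex_Main
begin

text \<open>Optical (+) and acoustical (-) branches of the dispersion relation of the
linearized diatomic chain, with c1 = 2 v11 + w11 and c2 = 2 v21 + w21.\<close>

definition chain_c :: "real \<Rightarrow> real \<Rightarrow> real" where
  "chain_c v w = 2 * v + w"

definition omega_plus :: "real \<Rightarrow> real \<Rightarrow> real \<Rightarrow> real \<Rightarrow> real \<Rightarrow> real" where
  "omega_plus v11 v21 w11 w21 \<theta> =
     (let c1 = chain_c v11 w11; c2 = chain_c v21 w21 in
      sqrt ((c1 + c2 + sqrt ((c1 - c2)^2 + 8 * v11 * v21 * (cos \<theta> + 1))) / 2))"

definition omega_minus :: "real \<Rightarrow> real \<Rightarrow> real \<Rightarrow> real \<Rightarrow> real \<Rightarrow> real" where
  "omega_minus v11 v21 w11 w21 \<theta> =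
     (let c1 = chain_c v11 w11; c2 = chain_c v21 w21 in
      sqrt ((c1 + c2 - sqrt ((c1 - c2)^2 + 8 * v11 * v21 * (cos \<theta> + 1))) / 2))"

end

theory Submission
  imports Defs
begin

lemma half_le: fixes x y :: real assumes "x \<le> 2 * y" shows "x / 2 \<le> y"
  using assms by linarith

lemma half_le2: fixes a s :: real assumes "0 \<le> s" "0 < a" shows "(a - s) / 2 \<le> a"
  using assms by (intro half_le) linarith

lemma half_le3: fixes a s :: real assumes "s < a" shows "(a + s) / 2 \<le> a"
  using assms by (intro half_le) linarith

theorem mainTheorem1:
  fixes v11 v21 w11 w21 \<theta> :: real
  assumes "w11 > 0" and "w21 > 0"
    and "4 * v11 + w11 > 0" and "4 * v21 + w21 > 0"
    and "v11 * v21 > 0"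
    and "chain_c v21 w21 > chain_c v11 w11"
    and "-pi < \<theta>" and "\<theta> \<le> pi"
  shows "2 * omega_plus v11 v21 w11 w21 \<theta> \<noteq> omega_minus v11 v21 w11 w21 (2 * \<theta>)
    \<and> 2 * omega_plus v11 v21 w11 w21 \<theta> \<noteq> omega_plus v11 v21 w11 w21 (2 * \<theta>)"
proof -
  define c1 where "c1 = chain_c v11 w11"
  define c2 where "c2 = chain_c v21 w21"
  define D where "D = (\<lambda>x. (c1 - c2)^2 + 8 * v11 * v21 * (cos x + 1))"
  have c1: "c1 > 2 * \<bar>v11\<bar>" using assms unfolding c1_def chain_c_def by linarith
  have c2: "c2 > 2 * \<bar>v21\<bar>" using assms unfolding c2_def chain_c_def by linarith
  have c12: "c2 > c1" using assms(6) unfolding c1_def c2_def .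
  have prod: "c1 * c2 > 4 * (v11 * v21)"
  proof -
    have "c1 * c2 > (2 * \<bar>v11\<bar>) * (2 * \<bar>v21\<bar>)"
      using c1 c2 by (intro mult_strict_mono) auto
    moreover have "v11 * v21 = \<bar>v11\<bar> * \<bar>v21\<bar>" using assms(5) by (simp add: abs_mult[symmetric])
    ultimately show ?thesis by simp
  qed
  have Dlo: "D x \<ge> (c1 - c2)^2" for x
  proof -
    have "cos x + 1 \<ge> 0" using cos_ge_minus_one[of x] by linarith
    thus ?thesis unfolding D_def using assms(5) by simp
  qed
  have Dhi: "D x < (c1 + c2)^2" for x
  proof -
    have "cos x + 1 \<le> 2" using cos_le_one[of x] by linarith
    hence "8 * (v11 * v21) * (cos x + 1) \<le> 8 * (v11 * v21) * 2"
      using assms(5) by (intro mult_left_mono) auto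
    thus ?thesis unfolding D_def using prod by (simp add: power2_eq_square algebra_simps)
  qed
  have slo: "sqrt (D x) \<ge> c2 - c1" for x
    using real_sqrt_le_mono[OF Dlo[of x]] c12 by simp
  have shi: "sqrt (D x) < c1 + c2" for x
  proof -
    have "sqrt (D x) < sqrt ((c1 + c2)^2)" using Dhi[of x] by (rule real_sqrt_less_mono)
    moreover have "c1 + c2 \<ge> 0" using c1 c2 by linarith
    ultimately show ?thesis by simp
  qed
  have sge0: "sqrt (D x) \<ge> 0" for x
    using order_trans[OF zero_le_power2[of "c1-c2"] Dlo[of x]] by simp
  have wp: "omega_plus v11 v21 w11 w21 x = sqrt ((c1 + c2 + sqrt (D x)) / 2)" for x
    unfolding omega_plus_def c1_def c2_def D_def Let_def by simp
  have wm: "omega_minus v11 v21 w11 w21 x = sqrt ((c1 + c2 - sqrt (D x)) / 2)" for x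
    unfolding omega_minus_def c1_def c2_def D_def Let_def by simp
  have L: "2 * omega_plus v11 v21 w11 w21 \<theta> \<ge> sqrt (4 * c2)"
  proof -
    have "sqrt (4 * c2) = 2 * sqrt c2" by (simp add: real_sqrt_mult)
    moreover have "sqrt c2 \<le> sqrt ((c1 + c2 + sqrt (D \<theta>)) / 2)"
      using slo[of \<theta>] by simp
    ultimately show ?thesis using wp by simp
  qed
  have R: "sqrt B < sqrt (4 * c2)" if "B \<le> c1 + c2" for B
    using that c12 c1 by simp
  have cpos: "c1 + c2 > 0" using c1 c2 by auto
  have s2: "sqrt (D (2 * \<theta>)) \<ge> 0" by (rule sge0)
  have "omega_minus v11 v21 w11 w21 (2 * \<theta>) < sqrt (4 * c2)"
  proof -
    have "(c1 + c2 - sqrt (D (2 * \<theta>))) / 2 \<le> c1 + c2" using s2 cpos by (rule half_le2)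
    thus ?thesis unfolding wm by (rule R)
  qed
  moreover have "omega_plus v11 v21 w11 w21 (2 * \<theta>) < sqrt (4 * c2)"
    unfolding wp by (rule R) (rule half_le3, rule shi)
  ultimately show ?thesis using L by auto
qed

end
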